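(* Consider the constrained perfect SIR model described in the context and assume $\gamma/\beta_{\min}+I_{\max}\le 1$. The barrier $[\partial\mathcal{A}]_-$ is constituted by the barrier curve $x^{\bar\beta}=(S,I)$ generated by the input rule $\bar\beta(t)=\beta_{\max}$ if $\lambda_2(t)-\lambda_1(t)<0$, $\bar\beta(t)=\beta_{\min}$ if $\lambda_2(t)-\lambda_1(t)>0$ (arbitrary in $[\beta_{\min},\beta_{\max}]$ if $\lambda_2(t)-\lambda_1(t)=0$), together with the adjoint equation $\dot\lambda=\begin{pmatrix}\bar\beta I & -\bar\beta I\\ \bar\beta S & -\bar\beta S+\gamma\end{pmatrix}\lambda$, $\lambda(\bar t)=(0,1)^T$, which ends tangentially to $G_0\cap\Pi$ at the point $(\gamma/\beta_{\min},I_{\max})\in G_0\cap\Pi$ at time $\bar t$; moreover there exists $\epsilon>0$ such that $x^{\bar\beta}(t)\in G_-$ for all $t\in]\bar t-\epsilon,\bar t[$.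
   Context: Perfect SIR model: fix $\gamma>0$, $0<\beta_{\min}\le\beta_{\max}$, $I_{\max}\in(0,1]$. State $x=(S,I)\in\mathbb{R}^2$, input a Lebesgue measurable $\beta:[t_0,\infty[\to[\beta_{\min},\beta_{\max}]$, dynamics $\dot S=-\beta SI$, $\dot I=\beta SI-\gamma I$, written $\dot x=f(x,\beta)$. Constraint function $g(S,I)=I-I_{\max}$; $G=\{I\le I_{\max}\}$, $G_-=\{I<I_{\max}\}$, $G_0=\{I=I_{\max}\}$, $\Pi=\{(S,I)\in[0,1]^2:S+I\le1\}$ (positively invariant), $G_\Pi=G\cap\Pi$. The admissible set is $\mathcal{A}=\{x_0\in G:\exists$ such an input $\beta$ with the solution from $x_0$ at $t_0$ in $G$ for all $t\ge t_0\}$ (a closed set); its barrier is $[\partial\mathcal{A}]_-=\partial\mathcal{A}\cap G_-$. A barrier curve of $\mathcal{A}$ is an integral curve $x^{\bar\beta}$ reaching $G_0$ tangentially at a finite time $\bar t$ at a point $z=x^{\bar\beta}(\bar t)$, together with a nonzero absolutely continuous solution $\lambda$ of $\dot\lambda=-(\partial f/\partial x)^T\lambda$ with $\lambda(\bar t)=Dg(z)^T=(0,1)^T$, such that $\min_{\beta\in[\beta_{\min},\beta_{\max}]}\lambda(t)^Tf(x^{\bar\beta}(t),\beta)=\lambda(t)^Tf(x^{\bar\beta}(t),\bar\beta(t))=0$ for a.e. $t$ and $\min_{\beta}L_fg(z,\beta)=L_fg(z,\bar\beta(\bar t))=0$, where $L_fg(x,\beta)=Dg(x)f(x,\beta)$.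 *)

theory Defs
  imports "HOL-Analysis.Analysis"
begin

text \<open>Perfect SIR model. States are pairs (S, I) :: real \<times> real.\<close>

definition sir_f :: "real \<Rightarrow> real \<times> real \<Rightarrow> real \<Rightarrow> real \<times> real" where
  "sir_f \<gamma> x b = (- b * fst x * snd x, b * fst x * snd x - \<gamma> * snd x)"

definition g_con :: "real \<Rightarrow> real \<times> real \<Rightarrow> real" where
  "g_con Imax x = snd x - Imax"

definition G_set :: "real \<Rightarrow> (real \<times> real) set" where
  "G_set Imax = {x. snd x \<le> Imax}"

definition G_minus :: "real \<Rightarrow> (real \<times> real) set" where
  "G_minus Imax = {x. snd x < Imax}"

definition G_zero :: "real \<Rightarrow> (real \<times> real) set" where
  "G_zero Imax = {x. snd x = Imax}"

definition Pi_set :: "(real \<times> real) set" where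
  "Pi_set = {x. 0 \<le> fst x \<and> fst x \<le> 1 \<and> 0 \<le> snd x \<and> snd x \<le> 1 \<and> fst x + snd x \<le> 1}"

text \<open>Lie derivative L_f g(x, b) = Dg(x) f(x, b), with Dg = (0, 1).\<close>
definition Lfg :: "real \<Rightarrow> real \<times> real \<Rightarrow> real \<Rightarrow> real" where
  "Lfg \<gamma> x b = snd (sir_f \<gamma> x b)"

definition admissible_input :: "real \<Rightarrow> real \<Rightarrow> real \<Rightarrow> (real \<Rightarrow> real) \<Rightarrow> bool" where
  "admissible_input bmin bmax t0 \<beta> \<longleftrightarrow>
     \<beta> \<in> borel_measurable lebesgue \<and> (\<forall>t\<ge>t0. bmin \<le> \<beta> t \<and> \<beta> t \<le> bmax)"

text \<open>(Caratheodory) solution from x0 at t0 under input \<beta>, existing on [t0, \<infinity>[.\<close>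
definition is_solution :: "real \<Rightarrow> (real \<Rightarrow> real) \<Rightarrow> real \<Rightarrow> real \<times> real \<Rightarrow> (real \<Rightarrow> real \<times> real) \<Rightarrow> bool" where
  "is_solution \<gamma> \<beta> t0 x0 x \<longleftrightarrow>
     x t0 = x0 \<and>
     (\<forall>t\<ge>t0. ((\<lambda>s. sir_f \<gamma> (x s) (\<beta> s)) has_integral (x t - x0)) {t0..t})"

definition admissible_set :: "real \<Rightarrow> real \<Rightarrow> real \<Rightarrow> real \<Rightarrow> real \<Rightarrow> (real \<times> real) set" where
  "admissible_set \<gamma> bmin bmax Imax t0 =
     {x0 \<in> G_set Imax. \<exists>\<beta> x. admissible_input bmin bmax t0 \<beta> \<and> is_solution \<gamma> \<beta> t0 x0 x \<and>
                              (\<forall>t\<ge>t0. x t \<in> G_set Imax)}"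

definition barrier :: "real \<Rightarrow> real \<Rightarrow> real \<Rightarrow> real \<Rightarrow> real \<Rightarrow> (real \<times> real) set" where
  "barrier \<gamma> bmin bmax Imax t0 = frontier (admissible_set \<gamma> bmin bmax Imax t0) \<inter> G_minus Imax"

end

theory Submission
  imports Defs
begin

lemma deriv_approx:
  fixes phi :: "real \<Rightarrow> real"
  assumes "(phi has_real_derivative D) (at x)" "e > 0"
  shows "\<exists>d>0. \<forall>z. \<bar>z - x\<bar> < d \<longrightarrow> \<bar>phi z - phi x - D * (z - x)\<bar> \<le> e * \<bar>z - x\<bar>"
proof -
  have "((\<lambda>z. (phi z - phi x) / (z - x)) \<longlongrightarrow> D) (at x)"
    using assms(1) by (simp add: has_field_derivative_iff)
  then obtain d where d: "d > 0" and H: "\<And>z. z \<noteq> x \<and> norm (z - x) < d \<Longrightarrow> norm ((phi z - phi x) / (z - x) - D) < e"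
    using assms(2) unfolding LIM_eq by blast
  show ?thesis
  proof (intro exI[of _ d] conjI allI impI d)
    fix z assume z: "\<bar>z - x\<bar> < d"
    show "\<bar>phi z - phi x - D * (z - x)\<bar> \<le> e * \<bar>z - x\<bar>"
    proof (cases "z = x")
      case True then show ?thesis by simp
    next
      case False
      then have "\<bar>(phi z - phi x) / (z - x) - D\<bar> < e" using H z by auto
      moreover have "phi z - phi x - D * (z - x) = ((phi z - phi x) / (z - x) - D) * (z - x)"
        using False by (simp add: field_simps)
      ultimately show ?thesis by (simp add: abs_mult mult_right_mono)
    qed
  qed
qed

lemma integral_lip:
  fixes h :: "real \<Rightarrow> real"
  assumes "(h has_integral i) {x..y}" "x \<le> y" "\<And>t. x \<le> t \<Longrightarrow> t \<le> y \<Longrightarrow> \<bar>h t\<bar> \<le> B"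
  shows "\<bar>i\<bar> \<le> B * (y - x)"
proof -
  have B: "0 \<le> B" using assms(2) assms(3)[of x] by auto
  show ?thesis using has_integral_bound_real[where S="{}", OF B _ assms(1)] assms by (auto simp: content_real)
qed

lemma chain_int:
  fixes u h phi phi' :: "real \<Rightarrow> real"
  assumes ab: "a \<le> b"
    and uint: "\<And>s t. a \<le> s \<Longrightarrow> s \<le> t \<Longrightarrow> t \<le> b \<Longrightarrow> (h has_integral (u t - u s)) {s..t}"
    and hb: "\<And>\<tau>. a \<le> \<tau> \<Longrightarrow> \<tau> \<le> b \<Longrightarrow> \<bar>h \<tau>\<bar> \<le> M"
    and dphi: "\<And>\<tau>. a \<le> \<tau> \<Longrightarrow> \<tau> \<le> b \<Longrightarrow> (phi has_real_derivative phi' (u \<tau>)) (at (u \<tau>))"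
    and cont: "continuous_on {a..b} (\<lambda>\<tau>. phi' (u \<tau>))"
  shows "((\<lambda>\<tau>. phi' (u \<tau>) * h \<tau>) has_integral (phi (u b) - phi (u a))) {a..b}"
proof -
  define g where "g = (\<lambda>\<tau>. phi' (u \<tau>) * h \<tau>)"
  have M0: "0 \<le> M" using hb[of a] ab by auto
  obtain K where K: "\<And>\<tau>. \<tau> \<in> {a..b} \<Longrightarrow> \<bar>phi' (u \<tau>)\<bar> \<le> K"
    using compact_imp_bounded[OF compact_continuous_image[OF cont compact_Icc]]
    by (auto simp: bounded_iff) (metis atLeastAtMost_iff)
  have hint: "h integrable_on {a..b}" using uint[of a b] ab by auto
  have gint: "g integrable_on {a..b}"
  proof (rule measurable_bounded_by_integrable_imp_integrable_real[where g="\<lambda>_. K * M"])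
    have "h \<in> borel_measurable (lebesgue_on {a..b})" using integrable_imp_measurable[OF hint] .
    moreover have "(\<lambda>\<tau>. phi' (u \<tau>)) \<in> borel_measurable (lebesgue_on {a..b})"
      by (rule continuous_imp_measurable_on_sets_lebesgue[OF cont]) simp
    ultimately show "g \<in> borel_measurable (lebesgue_on {a..b})" unfolding g_def by measurable
    show "(\<lambda>_. K * M) integrable_on {a..b}" by (rule integrable_const_ivl)
    show "\<And>x. x \<in> {a..b} \<Longrightarrow> \<bar>g x\<bar> \<le> K * M"
      unfolding g_def abs_mult using K hb M0 by (auto intro!: mult_mono) (meson abs_ge_zero order_trans)
    show "{a..b} \<in> sets lebesgue" by simp
  qed
  have gsub: "\<And>x y. a \<le> x \<Longrightarrow> y \<le> b \<Longrightarrow> g integrable_on {x..y}"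
    using gint by (rule integrable_on_subinterval) auto
  define F where "F = (\<lambda>t. phi (u t) - integral {a..t} g)"
  have core: "\<exists>d>0. \<forall>x y. a \<le> x \<longrightarrow> x \<le> s \<longrightarrow> s \<le> y \<longrightarrow> y \<le> b \<longrightarrow> y - x < d \<longrightarrow> \<bar>F y - F x\<bar> \<le> e * (y - x)"
    if s: "s \<in> {a..b}" and e: "e > 0" for s e
  proof -
    define D where "D = phi' (u s)"
    define e1 where "e1 = e / (4 * (M + 1))"
    define e2 where "e2 = e / (2 * (M + 1))"
    have e1: "e1 > 0" and e2: "e2 > 0" using e M0 by (auto simp: e1_def e2_def)
    obtain d1 where d1: "d1 > 0" and D1: "\<And>z. \<bar>z - u s\<bar> < d1 \<Longrightarrow> \<bar>phi z - phi (u s) - D * (z - u s)\<bar> \<le> e1 * \<bar>z - u s\<bar>"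
      using deriv_approx[OF dphi[of s] e1] s unfolding D_def by auto
    obtain d2 where d2: "d2 > 0" and D2: "\<And>\<tau>. \<tau> \<in> {a..b} \<Longrightarrow> dist \<tau> s < d2 \<Longrightarrow> dist (phi' (u \<tau>)) D < e2"
      using cont s e2 unfolding continuous_on_iff D_def by metis
    define d where "d = min (d1 / (M + 1)) d2"
    have d: "d > 0" using d1 d2 M0 by (auto simp: d_def)
    have lip: "\<bar>u y - u x\<bar> \<le> M * (y - x)" if "a \<le> x" "x \<le> y" "y \<le> b" for x y
      using integral_lip[OF uint[OF that] that(2)] hb that by auto
    show ?thesis
    proof (intro exI[of _ d] conjI d allI impI)
      fix x y assume xy: "a \<le> x" "x \<le> s" "s \<le> y" "y \<le> b" "y - x < d"
      have "(M + 1) * (y - x) < (M + 1) * d" using xy M0 by (intro mult_strict_left_mono) auto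
      also have "\<dots> \<le> d1"
      proof -
        have "d \<le> d1 / (M + 1)" by (simp add: d_def)
        then show ?thesis using M0 by (simp add: le_divide_eq mult.commute)
      qed
      finally have yx1: "(M + 1) * (y - x) < d1" .
      have uy: "\<bar>u y - u s\<bar> \<le> M * (y - s)" using lip[of s y] xy by auto
      have ux: "\<bar>u s - u x\<bar> \<le> M * (s - x)" using lip[of x s] xy by auto
      have "M * (y - s) \<le> (M + 1) * (y - x)" using xy M0 by (intro mult_mono) auto
      then have A1: "\<bar>phi (u y) - phi (u s) - D * (u y - u s)\<bar> \<le> e1 * (M * (y - s))"
        using D1[of "u y"] uy yx1 e1 by (smt (verit) mult_left_mono)
      have "M * (s - x) \<le> (M + 1) * (y - x)" using xy M0 by (intro mult_mono) auto
      then have A2: "\<bar>phi (u x) - phi (u s) - D * (u x - u s)\<bar> \<le> e1 * (M * (s - x))"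
        using D1[of "u x"] ux yx1 e1 by (smt (verit) abs_minus_commute mult_left_mono)
      have ig: "(g has_integral (integral {a..y} g - integral {a..x} g)) {x..y}"
      proof -
        have "integral {a..x} g + integral {x..y} g = integral {a..y} g"
          using xy by (intro Henstock_Kurzweil_Integration.integral_combine gsub[of a y]) auto
        moreover have "(g has_integral integral {x..y} g) {x..y}" using gsub xy by auto
        ultimately show ?thesis by (metis add_diff_cancel_left')
      qed
      have ih: "((\<lambda>\<tau>. D * h \<tau>) has_integral (D * (u y - u x))) {x..y}"
        using uint[of x y] xy by (intro has_integral_mult_right) auto
      have idiff: "((\<lambda>\<tau>. D * h \<tau> - g \<tau>) has_integral (D * (u y - u x) - (integral {a..y} g - integral {a..x} g))) {x..y}"
        by (rule has_integral_diff[OF ih ig])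
      have A3: "\<bar>D * (u y - u x) - (integral {a..y} g - integral {a..x} g)\<bar> \<le> (e2 * M) * (y - x)"
      proof (rule integral_lip[OF idiff xy(2)[THEN order_trans[OF _ xy(3)]]])
        fix t assume t: "x \<le> t" "t \<le> y"
        have "dist t s < d2" using t xy d_def by (auto simp: dist_real_def)
        then have "\<bar>phi' (u t) - D\<bar> < e2" using D2[of t] t xy by (auto simp: dist_real_def)
        then have "\<bar>D - phi' (u t)\<bar> \<le> e2" by linarith
        moreover have "\<bar>h t\<bar> \<le> M" using hb t xy by auto
        ultimately have "\<bar>D - phi' (u t)\<bar> * \<bar>h t\<bar> \<le> e2 * M" using e2 by (intro mult_mono) auto
        then show "\<bar>D * h t - g t\<bar> \<le> e2 * M" unfolding g_def by (simp add: abs_mult[symmetric] left_diff_distrib)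
      qed
      have "F y - F x = (phi (u y) - phi (u s) - D * (u y - u s)) - (phi (u x) - phi (u s) - D * (u x - u s))
           + (D * (u y - u x) - (integral {a..y} g - integral {a..x} g))"
        unfolding F_def by (simp add: algebra_simps)
      then have "\<bar>F y - F x\<bar> \<le> e1 * (M * (y - s)) + e1 * (M * (s - x)) + (e2 * M) * (y - x)"
        using A1 A2 A3 by linarith
      also have "\<dots> = (e1 * M + e2 * M) * (y - x)" by (simp add: algebra_simps)
      also have "\<dots> \<le> e * (y - x)"
      proof (rule mult_right_mono)
        have "e1 * M \<le> e / 4" using M0 e by (simp add: e1_def field_simps)
        moreover have "e2 * M \<le> e / 2" using M0 e by (simp add: e2_def field_simps)
        ultimately show "e1 * M + e2 * M \<le> e" using e by linarith
      qed (use xy in auto)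
      finally show "\<bar>F y - F x\<bar> \<le> e * (y - x)" .
    qed
  qed
  have der0: "(F has_real_derivative 0) (at s within {a..b})" if s: "s \<in> {a..b}" for s
    unfolding has_field_derivative_iff Lim_within
  proof (intro allI impI)
    fix e :: real assume e: "e > 0"
    obtain d where d: "d > 0" and H: "\<And>x y. a \<le> x \<Longrightarrow> x \<le> s \<Longrightarrow> s \<le> y \<Longrightarrow> y \<le> b \<Longrightarrow> y - x < d \<Longrightarrow> \<bar>F y - F x\<bar> \<le> (e/2) * (y - x)"
      using core[OF s, of "e/2"] e by auto
    show "\<exists>d>0. \<forall>t\<in>{a..b}. 0 < dist t s \<and> dist t s < d \<longrightarrow> dist ((F t - F s) / (t - s)) 0 < e"
    proof (intro exI[of _ d] conjI d ballI impI)
      fix t assume t: "t \<in> {a..b}" "0 < dist t s \<and> dist t s < d"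
      have "\<bar>F t - F s\<bar> \<le> (e/2) * \<bar>t - s\<bar>"
      proof (cases "s \<le> t")
        case True then show ?thesis using H[of s t] s t by (auto simp: dist_real_def)
      next
        case False then show ?thesis using H[of t s] s t by (auto simp: dist_real_def abs_minus_commute)
      qed
      moreover have "\<bar>t - s\<bar> > 0" using t by (auto simp: dist_real_def)
      ultimately have "\<bar>F t - F s\<bar> / \<bar>t - s\<bar> \<le> e/2" by (simp add: divide_le_eq)
      then have "\<bar>(F t - F s) / (t - s)\<bar> \<le> e/2" by (simp add: abs_divide)
      moreover have "dist ((F t - F s) / (t - s)) 0 = \<bar>(F t - F s) / (t - s)\<bar>" by (simp add: dist_real_def)
      ultimately show "dist ((F t - F s) / (t - s)) 0 < e" using e by linarith
    qed
  qed
  obtain c where c: "\<And>x. x \<in> {a..b} \<Longrightarrow> F x = c"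
    using has_field_derivative_zero_constant[of "{a..b}" F] der0 by auto
  have "F b = F a" using c ab by auto
  then have "integral {a..b} g = phi (u b) - phi (u a)" unfolding F_def by simp
  then show ?thesis using gint unfolding g_def by (metis has_integral_integrable_integral)
qed

lemma ode_fwd:
  fixes G G' :: "real \<Rightarrow> real"
  assumes Gd: "\<And>v. (G has_real_derivative G' v) (at v)"
    and G0: "G 0 > 0" and W: "W > 0" "G W \<le> 0"
    and L: "L > 0" "\<And>v. 0 \<le> v \<Longrightarrow> v \<le> W \<Longrightarrow> \<bar>G' v\<bar> \<le> L"
  shows "\<exists>w. w 0 = 0 \<and> (\<forall>t\<ge>0. 0 \<le> w t \<and> G (w t) > 0 \<and> (w has_real_derivative G (w t)) (at t))
            \<and> (\<forall>t>0. w t > 0) \<and> (\<forall>v\<ge>0. (\<forall>u\<in>{0..v}. G u > 0) \<longrightarrow> (\<exists>t\<ge>0. w t = v))"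
proof -
  have isG: "\<And>x. isCont G x" using Gd by (rule DERIV_isCont)
  then have cG: "continuous_on UNIV G" by (simp add: continuous_at_imp_continuous_on)
  define Z where "Z = {v. 0 \<le> v \<and> v \<le> W \<and> G v \<le> 0}"
  have Zc: "closed Z"
  proof -
    have "Z = {0..W} \<inter> {v. G v \<le> 0}" by (auto simp: Z_def)
    moreover have "closed {v. G v \<le> 0}" using closed_Collect_le[OF cG continuous_on_const] .
    ultimately show ?thesis by auto
  qed
  have ZW: "W \<in> Z" using W by (auto simp: Z_def)
  have Zb: "bdd_below Z" by (auto simp: Z_def bdd_below_def)
  define wp where "wp = Inf Z"
  have wpZ: "wp \<in> Z" unfolding wp_def using closed_contains_Inf[OF _ Zb Zc] ZW by auto
  have Gwp: "G wp \<le> 0" and wpW: "wp \<le> W" and wp0: "0 \<le> wp" using wpZ by (auto simp: Z_def)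
  have wppos: "wp > 0" using wp0 Gwp G0 by (cases "wp = 0") auto
  have Gpos0: "G v > 0" if "0 \<le> v" "v < wp" for v
  proof (rule ccontr)
    assume "\<not> G v > 0"
    then have "v \<in> Z" using that wpW by (auto simp: Z_def)
    then have "wp \<le> v" unfolding wp_def using Zb by (rule cInf_lower)
    then show False using that by auto
  qed
  have Glin: "G v \<le> L * (wp - v)" if vv: "0 \<le> v" "v < wp" for v
  proof -
    obtain z where z: "v < z" "z < wp" "G wp - G v = (wp - v) * G' z"
      using MVT2[OF vv(2), of G G'] Gd by blast
    have "\<bar>G' z\<bar> \<le> L" using L(2)[of z] z that wpW by auto
    then have "- G' z \<le> L" by linarith
    then have "(wp - v) * (- G' z) \<le> (wp - v) * L" using that by (intro mult_left_mono) auto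
    then show ?thesis using z Gwp by (simp add: algebra_simps)
  qed
  obtain dl where dl: "dl > 0" and dlH: "\<And>v. dist v 0 < dl \<Longrightarrow> dist (G v) (G 0) < G 0"
    using isG[of 0, unfolded continuous_at_eps_delta] G0 by blast
  define a where "a = - dl / 2"
  have a0: "a < 0" using dl by (simp add: a_def)
  have Gpos: "G v > 0" if "a \<le> v" "v < wp" for v
  proof (cases "v < 0")
    case True
    then have "dist v 0 < dl" using that dl by (auto simp: a_def dist_real_def)
    then show ?thesis using dlH[of v] by (auto simp: dist_real_def)
  next
    case False then show ?thesis using Gpos0 that by auto
  qed
  have cinv: "continuous_on {x..y} (\<lambda>u. 1 / G u)" if xy: "a \<le> x" "y < wp" for x y
  proof -
    have "G u \<noteq> 0" if "u \<in> {x..y}" for u using Gpos[of u] that xy by auto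
    then show ?thesis by (intro continuous_intros continuous_on_subset[OF cG]) auto
  qed
  define T where "T = (\<lambda>v. integral {a..v} (\<lambda>u. 1 / G u) - integral {a..0} (\<lambda>u. 1 / G u))"
  have TD: "(T has_real_derivative 1 / G v) (at v)" if "a < v" "v < wp" for v
  proof -
    define v' where "v' = (v + wp) / 2"
    have "((\<lambda>x. integral {a..x} (\<lambda>u. 1 / G u)) has_real_derivative 1 / G v) (at v within {a..v'})"
      using integral_has_real_derivative[OF cinv[of a v'], of v] that by (auto simp: v'_def)
    then have "((\<lambda>x. integral {a..x} (\<lambda>u. 1 / G u)) has_real_derivative 1 / G v) (at v)"
      using at_within_Icc_at[of a v v'] that by (auto simp: v'_def)
    then show ?thesis unfolding T_def by (rule derivative_eq_intros) auto
  qed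
  have Tc: "isCont T v" if "a < v" "v < wp" for v using TD[OF that] by (rule DERIV_isCont)
  have Tcon: "continuous_on {x..y} T" if "a < x" "y < wp" for x y
    using Tc that by (intro continuous_at_imp_continuous_on) auto
  have Tmono: "T x < T y" if "a < x" "x < y" "y < wp" for x y
  proof (rule DERIV_pos_imp_increasing_open[OF that(2)])
    show "\<And>z. x < z \<Longrightarrow> z < y \<Longrightarrow> \<exists>d. (T has_real_derivative d) (at z) \<and> 0 < d"
      using TD Gpos that by (metis dual_order.strict_trans less_imp_le zero_less_divide_1_iff)
    show "continuous_on {x..y} T" using Tcon that by auto
  qed
  have Tle: "T x \<le> T y" if "a < x" "x \<le> y" "y < wp" for x y
    using Tmono that by (cases "x = y") (auto intro: less_imp_le)
  have T0: "T 0 = 0" by (simp add: T_def)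
  have Tlow: "T v \<ge> (ln wp - ln (wp - v)) / L" if "0 \<le> v" "v < wp" for v
  proof -
    have int: "(\<lambda>u. 1 / G u) integrable_on {a..v}"
      using cinv[of a v] that by (intro integrable_continuous_real) auto
    have "integral {a..0} (\<lambda>u. 1 / G u) + integral {0..v} (\<lambda>u. 1 / G u) = integral {a..v} (\<lambda>u. 1 / G u)"
      using that a0 by (intro Henstock_Kurzweil_Integration.integral_combine int) auto
    then have Tv: "T v = integral {0..v} (\<lambda>u. 1 / G u)" by (simp add: T_def)
    have F: "((\<lambda>u. 1 / (L * (wp - u))) has_integral ((- ln (wp - v) / L) - (- ln (wp - 0) / L))) {0..v}"
    proof (rule fundamental_theorem_of_calculus)
      show "0 \<le> v" by fact
      fix x assume x: "x \<in> {0..v}"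
      then have "x < wp" using that by auto
      then have "((\<lambda>u. - ln (wp - u) / L) has_real_derivative 1 / (L * (wp - x))) (at x)"
        using L by (auto intro!: derivative_eq_intros simp: field_simps)
      then show "((\<lambda>u. - ln (wp - u) / L) has_vector_derivative 1 / (L * (wp - x))) (at x within {0..v})"
        by (simp add: has_real_derivative_iff_has_vector_derivative has_vector_derivative_at_within)
    qed
    have "integral {0..v} (\<lambda>u. 1 / (L * (wp - u))) \<le> integral {0..v} (\<lambda>u. 1 / G u)"
    proof (rule integral_le)
      show "(\<lambda>u. 1 / (L * (wp - u))) integrable_on {0..v}" using F by blast
      show "(\<lambda>u. 1 / G u) integrable_on {0..v}" using integrable_on_subinterval[OF int, of 0 v] a0 by auto
      fix x assume x: "x \<in> {0..v}"
      then have "0 < G x" "G x \<le> L * (wp - x)" using Gpos0 Glin that by auto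
      then show "1 / (L * (wp - x)) \<le> 1 / G x" by (intro divide_left_mono) auto
    qed
    then show ?thesis using F Tv by (simp add: integral_unique diff_divide_distrib)
  qed
  have Tsurj: "\<exists>v. 0 \<le> v \<and> v < wp \<and> T v = t" if "t \<ge> 0" for t
  proof -
    define v1 where "v1 = wp * (1 - exp (- L * t))"
    have v1: "0 \<le> v1" "v1 < wp" using wppos that L by (auto simp: v1_def mult_le_cancel_left1)
    have "wp - v1 = wp * exp (- L * t)" by (simp add: v1_def algebra_simps)
    then have "ln (wp - v1) = ln wp - L * t" using wppos by (simp add: ln_mult)
    then have "T v1 \<ge> t" using Tlow[OF v1] L by simp
    then have "\<exists>x\<ge>0. x \<le> v1 \<and> T x = t"
      using IVT'[of T 0 t v1] T0 that v1 Tcon[of 0 v1] a0 by auto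
    then obtain v where "0 \<le> v" "v \<le> v1" "T v = t" by blast
    then show ?thesis using v1 by auto
  qed
  define a' where "a' = a / 2"
  have a': "a < a'" "a' < 0" using a0 by (auto simp: a'_def)
  have Ta': "T a' < 0" using Tmono[of a' 0] a' wppos T0 by auto
  have Tex: "\<exists>v. a' \<le> v \<and> v < wp \<and> T v = t" if "t \<ge> T a'" for t
  proof (cases "t \<ge> 0")
    case True then show ?thesis using Tsurj a' by (meson less_le_trans order.strict_implies_order)
  next
    case False
    have "\<exists>x\<ge>a'. x \<le> 0 \<and> T x = t"
      using IVT'[of T a' t 0] T0 that a' Tcon[of a' 0] wppos False by auto
    then obtain v where "a' \<le> v" "v \<le> 0" "T v = t" by blast
    then show ?thesis using wppos by auto
  qed
  define w where "w = (\<lambda>t. SOME v. a' \<le> v \<and> v < wp \<and> T v = t)"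
  have wT: "a' \<le> w t \<and> w t < wp \<and> T (w t) = t" if "t \<ge> T a'" for t
    unfolding w_def by (rule someI_ex[OF Tex[OF that]])
  have Tinj: "x = y" if "a < x" "x < wp" "a < y" "y < wp" "T x = T y" for x y
    using Tmono that by (metis linorder_neqE_linordered_idom order_less_irrefl)
  have winv: "w (T v) = v" if "a' \<le> v" "v < wp" for v
  proof -
    have "T v \<ge> T a'" using Tle that a' by auto
    then show ?thesis using wT[of "T v"] Tinj[of "w (T v)" v] that a' by auto
  qed
  have w0: "w 0 = 0" using winv[of 0] T0 a' wppos by auto
  have wnn: "0 \<le> w t" if "t \<ge> 0" for t
  proof (rule ccontr)
    assume "\<not> 0 \<le> w t"
    then have "T (w t) < T 0" using Tmono[of "w t" 0] wT[of t] that Ta' a' wppos by auto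
    then show False using wT[of t] that Ta' T0 by auto
  qed
  have wpos: "0 < w t" if "t > 0" for t
  proof -
    have "w t \<noteq> 0" using wT[of t] that Ta' T0 by auto
    then show ?thesis using wnn[of t] that by auto
  qed
  have wder: "(w has_real_derivative G (w t)) (at t)" if t: "t \<ge> 0" for t
  proof -
    have wt: "a' \<le> w t" "w t < wp" "T (w t) = t" using wT[of t] t Ta' by auto
    have w0t: "0 \<le> w t" using wnn t by auto
    have "DERIV T (w t) :> 1 / G (w t)" using TD[of "w t"] wt a' w0t by auto
    moreover have "1 / G (w t) \<noteq> 0" using Gpos[of "w t"] wt a' by auto
    moreover have "T a' < t" "t < t + 1" using Ta' t by auto
    moreover have "\<And>y. T a' < y \<Longrightarrow> y < t + 1 \<Longrightarrow> T (w y) = y" using wT by auto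
    moreover have "isCont w t"
    proof -
      define d where "d = min ((w t - a') / 2) ((wp - w t) / 2)"
      have d: "d > 0" using wt a' w0t by (auto simp: d_def)
      have "isCont w (T (w t))"
      proof (rule isCont_inverse_function[where f=T and g=w and x="w t", OF d])
        fix z assume z: "\<bar>z - w t\<bar> \<le> d"
        then have zz: "\<bar>z - w t\<bar> \<le> (w t - a') / 2" "\<bar>z - w t\<bar> \<le> (wp - w t) / 2" by (auto simp: d_def)
        moreover have "z - w t \<le> \<bar>z - w t\<bar>" "w t - z \<le> \<bar>z - w t\<bar>" by auto
        ultimately have "a' \<le> z \<and> z < wp" using wt a' w0t by argo
        then have "a' \<le> z" "z < wp" by auto
        then show "w (T z) = z" "isCont T z" using winv Tc a' by auto
      qed
      then show ?thesis using wt by simp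
    qed
    ultimately have "DERIV w t :> inverse (1 / G (w t))" by (rule DERIV_inverse_function)
    then show ?thesis by simp
  qed
  show ?thesis
  proof (intro exI[of _ w] conjI allI impI w0)
    fix t :: real assume t: "0 \<le> t"
    show "0 \<le> w t" using wnn t .
    show "G (w t) > 0" using Gpos[of "w t"] wT[of t] t Ta' a' by auto
    show "(w has_real_derivative G (w t)) (at t)" using wder t .
  next
    fix t :: real assume "t > 0" then show "w t > 0" by (rule wpos)
  next
    fix v :: real assume v: "0 \<le> v" "\<forall>u\<in>{0..v}. 0 < G u"
    have "v < wp"
    proof (rule ccontr)
      assume "\<not> v < wp" then have "wp \<in> {0..v}" using wp0 by auto
      then have "0 < G wp" using v(2) by blast
      then show False using Gwp by auto
    qed
    then have "T v \<ge> 0" using Tle[of 0 v] v a0 T0 by auto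
    moreover have "w (T v) = v" using winv \<open>v < wp\<close> v a' by auto
    ultimately show "\<exists>t\<ge>0. w t = v" by auto
  qed
qed

locale sirloc =
  fixes \<gamma> bmin bmax Imax Ss :: real
  assumes Ss_def: "Ss = \<gamma> / bmin"
  assumes gpos: "\<gamma> > 0" and bpos: "0 < bmin" and ble: "bmin \<le> bmax"
    and Ipos: "0 < Imax" and Ile: "Imax \<le> 1" and cond: "\<gamma> / bmin + Imax \<le> 1"
begin

definition V where "V p = snd p + fst p - Ss * ln (fst p)"
definition C0 where "C0 = Imax + Ss - Ss * ln Ss"
definition Gq where "Gq q v = fst q + snd q - \<gamma> * v - fst q * exp (- bmin * v)"

lemma Ss_pos: "Ss > 0" using gpos bpos by (simp add: Ss_def)
lemma gamma_eq: "\<gamma> = bmin * Ss" using bpos by (simp add: Ss_def)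

lemma Gq_deriv: "(Gq q has_real_derivative (- \<gamma> + bmin * fst q * exp (- bmin * v))) (at v)"
  unfolding Gq_def by (auto intro!: derivative_eq_intros simp: algebra_simps)

lemma sol_exists:
  assumes I0: "snd q > 0"
  shows "\<exists>w. w 0 = 0 \<and> (\<forall>t\<ge>0. 0 \<le> w t \<and> Gq q (w t) > 0 \<and> (w has_real_derivative Gq q (w t)) (at t))"
proof -
  define W where "W = (2 * \<bar>fst q\<bar> + snd q) / \<gamma> + 1"
  have W0: "W > 0" using I0 gpos by (auto simp: W_def intro!: add_nonneg_pos)
  have "fst q * exp (- bmin * W) \<ge> - \<bar>fst q\<bar>"
  proof -
    have "exp (- bmin * W) \<le> 1" using bpos W0 by simp
    then have "\<bar>fst q * exp (- bmin * W)\<bar> \<le> \<bar>fst q\<bar>" by (simp add: abs_mult mult_left_le)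
    then show ?thesis by linarith
  qed
  moreover have "\<gamma> * W = 2 * \<bar>fst q\<bar> + snd q + \<gamma>" using gpos by (simp add: W_def field_simps)
  ultimately have GW: "Gq q W \<le> 0" unfolding Gq_def using gpos by linarith
  define L where "L = \<gamma> + bmin * \<bar>fst q\<bar> + 1"
  have L0: "L > 0" using gpos bpos by (simp add: L_def add_pos_nonneg)
  have Lb: "\<bar>- \<gamma> + bmin * fst q * exp (- bmin * v)\<bar> \<le> L" if "0 \<le> v" for v
  proof -
    have "exp (- bmin * v) \<le> 1" using bpos that by simp
    then have "\<bar>bmin * fst q * exp (- bmin * v)\<bar> \<le> bmin * \<bar>fst q\<bar>"
      using bpos by (simp add: abs_mult mult_left_le)
    then show ?thesis using gpos by (simp add: L_def)
  qed
  have G0: "Gq q 0 > 0" using I0 by (simp add: Gq_def)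
  show ?thesis using ode_fwd[of "Gq q" "\<lambda>v. - \<gamma> + bmin * fst q * exp (- bmin * v)" W L, OF Gq_deriv G0 W0 GW L0 Lb]
    by blast
qed

lemma Gq_bound:
  assumes I0: "snd q > 0" "snd q \<le> Imax" and C: "fst q \<le> Ss \<or> V q \<le> C0" and v: "0 \<le> v"
  shows "Gq q v \<le> Imax"
proof (cases "fst q \<le> Ss")
  case True
  have "Gq q v - snd q = fst q * (1 - exp (- bmin * v)) - \<gamma> * v" by (simp add: Gq_def algebra_simps)
  also have "\<dots> \<le> 0"
  proof (cases "fst q \<le> 0")
    case True
    have "exp (- bmin * v) \<le> 1" using bpos v by simp
    then have "fst q * (1 - exp (- bmin * v)) \<le> 0" using True by (simp add: mult_nonpos_nonneg)
    moreover have "\<gamma> * v \<ge> 0" using gpos v by simp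
    ultimately show ?thesis by linarith
  next
    case False
    have "1 - exp (- bmin * v) \<le> bmin * v" using exp_ge_add_one_self[of "- bmin * v"] by simp
    then have "fst q * (1 - exp (- bmin * v)) \<le> fst q * (bmin * v)" using False by (simp add: mult_left_mono)
    also have "\<dots> \<le> Ss * (bmin * v)" using \<open>fst q \<le> Ss\<close> bpos v by (simp add: mult_right_mono)
    also have "\<dots> = \<gamma> * v" by (simp add: gamma_eq)
    finally show ?thesis by simp
  qed
  finally show ?thesis using I0 by simp
next
  case False
  then have S0: "fst q > Ss" and VC: "V q \<le> C0" using C by auto
  have Sq0: "fst q > 0" using S0 Ss_pos by simp
  define ws where "ws = ln (fst q / Ss) / bmin"
  have e1: "exp (- bmin * ws) = Ss / fst q"
    using bpos Sq0 Ss_pos by (simp add: ws_def exp_minus ln_div exp_diff)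
  have e2: "fst q * exp (- bmin * v) = Ss * exp (- bmin * (v - ws))"
  proof -
    have "exp (- bmin * v) = exp (- bmin * ws) * exp (- bmin * (v - ws))"
      by (simp add: exp_add[symmetric] algebra_simps)
    then show ?thesis using e1 Sq0 by simp
  qed
  have e3: "fst q * exp (- bmin * ws) = Ss" using e1 Sq0 by simp
  have "Gq q v - Gq q ws = - \<gamma> * (v - ws) - fst q * exp (- bmin * v) + fst q * exp (- bmin * ws)"
    by (simp add: Gq_def algebra_simps)
  also have "\<dots> = Ss * (1 - bmin * (v - ws) - exp (- bmin * (v - ws)))"
    by (simp only: e2 e3 gamma_eq) (simp add: algebra_simps)
  also have "\<dots> \<le> 0"
    using exp_ge_add_one_self[of "- bmin * (v - ws)"] Ss_pos by (simp add: mult_nonpos_nonneg mult_le_0_iff)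
  finally have "Gq q v \<le> Gq q ws" by simp
  also have "Gq q ws = V q - C0 + Imax"
  proof -
    have "\<gamma> * ws = Ss * (ln (fst q) - ln Ss)" using bpos Sq0 Ss_pos by (simp add: ws_def gamma_eq ln_div)
    then show ?thesis using e1 Sq0 unfolding Gq_def V_def C0_def by (simp add: algebra_simps)
  qed
  finally show ?thesis using VC by simp
qed

lemma adm:
  assumes I0: "snd q > 0" "snd q \<le> Imax" and C: "fst q \<le> Ss \<or> V q \<le> C0"
  shows "q \<in> admissible_set \<gamma> bmin bmax Imax t0"
proof -
  obtain w where w0: "w 0 = 0" and wH: "\<And>t. t \<ge> 0 \<Longrightarrow> 0 \<le> w t \<and> Gq q (w t) > 0 \<and> (w has_real_derivative Gq q (w t)) (at t)"
    using sol_exists[OF I0(1)] by blast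
  define y where "y = (\<lambda>t. (fst q * exp (- bmin * w (t - t0)), Gq q (w (t - t0))))"
  have yder: "(y has_vector_derivative sir_f \<gamma> (y t) bmin) (at t)" if t: "t \<ge> t0" for t
  proof -
    have wa: "(w has_real_derivative Gq q (w (t - t0))) (at (t - t0))" using wH[of "t - t0"] t by auto
    have wb: "((\<lambda>t. t - t0) has_real_derivative 1) (at t)" by (auto intro!: derivative_eq_intros)
    have wd: "((\<lambda>t. w (t - t0)) has_real_derivative Gq q (w (t - t0))) (at t)"
      using DERIV_chain2[OF wa wb] by simp
    have d1: "((\<lambda>t. fst q * exp (- bmin * w (t - t0))) has_real_derivative
        (- bmin * (fst q * exp (- bmin * w (t - t0))) * Gq q (w (t - t0)))) (at t)"
      by (auto intro!: derivative_eq_intros wd simp: algebra_simps)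
    have d2: "((\<lambda>t. Gq q (w (t - t0))) has_real_derivative
        ((- \<gamma> + bmin * fst q * exp (- bmin * w (t - t0))) * Gq q (w (t - t0)))) (at t)"
      using DERIV_chain2[OF Gq_deriv wd] .
    have "(y has_vector_derivative
        (- bmin * (fst q * exp (- bmin * w (t - t0))) * Gq q (w (t - t0)),
         (- \<gamma> + bmin * fst q * exp (- bmin * w (t - t0))) * Gq q (w (t - t0)))) (at t)"
      unfolding y_def using d1 d2 by (intro has_vector_derivative_Pair) (simp_all add: has_real_derivative_iff_has_vector_derivative)
    then show ?thesis unfolding sir_f_def y_def by (simp add: algebra_simps)
  qed
  have yt0: "y t0 = q" using w0 by (simp add: y_def Gq_def)
  have sol: "is_solution \<gamma> (\<lambda>_. bmin) t0 q y"
    unfolding is_solution_def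
  proof (intro conjI allI impI yt0)
    fix t assume t: "t0 \<le> t"
    have "((\<lambda>s. sir_f \<gamma> (y s) bmin) has_integral (y t - y t0)) {t0..t}"
      using t yder by (intro fundamental_theorem_of_calculus) (auto intro: has_vector_derivative_at_within)
    then show "((\<lambda>s. sir_f \<gamma> (y s) ((\<lambda>_. bmin) s)) has_integral (y t - q)) {t0..t}" using yt0 by simp
  qed
  have inG: "y t \<in> G_set Imax" if "t \<ge> t0" for t
    using Gq_bound[OF I0 C, of "w (t - t0)"] wH[of "t - t0"] that by (simp add: y_def G_set_def)
  have ai: "admissible_input bmin bmax t0 (\<lambda>_. bmin)" using ble by (simp add: admissible_input_def)
  show ?thesis unfolding admissible_set_def using I0 ai sol inG by (auto simp: G_set_def)
qed

end

context sirloc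
begin

lemma nonadm:
  assumes S0: "fst q > Ss" and I0: "snd q > 0" and VC: "V q > C0"
  shows "q \<notin> admissible_set \<gamma> bmin bmax Imax t0"
proof
  assume "q \<in> admissible_set \<gamma> bmin bmax Imax t0"
  then obtain \<beta> y where ai: "admissible_input bmin bmax t0 \<beta>" and sol: "is_solution \<gamma> \<beta> t0 q y"
    and inG: "\<And>t. t \<ge> t0 \<Longrightarrow> y t \<in> G_set Imax"
    by (auto simp: admissible_set_def)
  have bb: "bmin \<le> \<beta> t" "\<beta> t \<le> bmax" if "t \<ge> t0" for t using ai that by (auto simp: admissible_input_def)
  define h where "h = (\<lambda>\<tau>. sir_f \<gamma> (y \<tau>) (\<beta> \<tau>))"
  have yt0: "y t0 = q" and hint0: "\<And>t. t \<ge> t0 \<Longrightarrow> (h has_integral (y t - q)) {t0..t}"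
    using sol by (auto simp: is_solution_def h_def)
  have hint: "(h has_integral (y t - y s)) {s..t}" if st: "t0 \<le> s" "s \<le> t" for s t
  proof -
    have i1: "h integrable_on {t0..t}" using hint0[of t] st by (meson has_integral_integrable order_trans)
    have "integral {t0..s} h + integral {s..t} h = integral {t0..t} h"
      by (rule Henstock_Kurzweil_Integration.integral_combine) (use st i1 in auto)
    moreover have "integral {t0..s} h = y s - q" using hint0[of s] st by (simp add: integral_unique)
    moreover have "integral {t0..t} h = y t - q" using hint0[of t] st by (simp add: integral_unique)
    ultimately have "integral {s..t} h = y t - y s" by (simp add: algebra_simps)
    moreover have "h integrable_on {s..t}" using integrable_on_subinterval[OF i1, of s t] st by auto
    ultimately show ?thesis by (metis has_integral_integrable_integral)
  qed
  define S where "S = (\<lambda>t. fst (y t))"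
  define I where "I = (\<lambda>t. snd (y t))"
  define hS where "hS = (\<lambda>\<tau>. - \<beta> \<tau> * S \<tau> * I \<tau>)"
  define hI where "hI = (\<lambda>\<tau>. \<beta> \<tau> * S \<tau> * I \<tau> - \<gamma> * I \<tau>)"
  have intS: "(hS has_integral (S t - S s)) {s..t}" if "t0 \<le> s" "s \<le> t" for s t
    using has_integral_linear[OF hint[OF that] bounded_linear_fst]
    by (simp add: o_def h_def sir_f_def hS_def S_def I_def)
  have intI: "(hI has_integral (I t - I s)) {s..t}" if "t0 \<le> s" "s \<le> t" for s t
    using has_integral_linear[OF hint[OF that] bounded_linear_snd]
    by (simp add: o_def h_def sir_f_def hI_def S_def I_def)
  have contY: "continuous_on {t0..T} y" for T
  proof (cases "t0 \<le> T")
    case True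
    have "h integrable_on {t0..T}" using hint0[OF True] by (rule has_integral_integrable)
    then have c: "continuous_on {t0..T} (\<lambda>t. q + integral {t0..t} h)"
      by (intro continuous_intros indefinite_integral_continuous_1)
    have "y t = q + integral {t0..t} h" if "t \<in> {t0..T}" for t
      using hint0[of t] that by (simp add: integral_unique)
    then show ?thesis using c by (metis (no_types, lifting) continuous_on_cong)
  next
    case False then show ?thesis by simp
  qed
  have contS: "continuous_on {t0..T} S" for T unfolding S_def by (intro continuous_intros contY)
  have contI: "continuous_on {t0..T} I" for T unfolding I_def by (intro continuous_intros contY)
  have bnd: "\<exists>M. \<forall>\<tau>\<in>{t0..T}. \<bar>hS \<tau>\<bar> \<le> M \<and> \<bar>hI \<tau>\<bar> \<le> M" for T
  proof -
    obtain B1 where B1: "\<And>\<tau>. \<tau> \<in> {t0..T} \<Longrightarrow> \<bar>S \<tau>\<bar> \<le> B1"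
      using compact_imp_bounded[OF compact_continuous_image[OF contS compact_Icc]]
      by (auto simp: bounded_iff) (metis atLeastAtMost_iff)
    obtain B2 where B2: "\<And>\<tau>. \<tau> \<in> {t0..T} \<Longrightarrow> \<bar>I \<tau>\<bar> \<le> B2"
      using compact_imp_bounded[OF compact_continuous_image[OF contI compact_Icc]]
      by (auto simp: bounded_iff) (metis atLeastAtMost_iff)
    define B where "B = max (max B1 B2) 0"
    have SB: "\<bar>S \<tau>\<bar> \<le> B" and IB: "\<bar>I \<tau>\<bar> \<le> B" if "\<tau> \<in> {t0..T}" for \<tau>
      using B1[OF that] B2[OF that] by (auto simp: B_def)
    have B0: "B \<ge> 0" by (simp add: B_def)
    have bm: "\<bar>\<beta> \<tau>\<bar> \<le> bmax" if "\<tau> \<in> {t0..T}" for \<tau> using bb[of \<tau>] that bpos by auto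
    have bmx: "bmax \<ge> 0" using bpos ble by simp
    have k1: "\<bar>\<beta> \<tau> * S \<tau> * I \<tau>\<bar> \<le> bmax * B * B" if "\<tau> \<in> {t0..T}" for \<tau>
      unfolding abs_mult using bm[OF that] SB[OF that] IB[OF that] B0 bmx
      by (intro mult_mono) auto
    have k2: "\<bar>\<gamma> * I \<tau>\<bar> \<le> \<gamma> * B" if "\<tau> \<in> {t0..T}" for \<tau>
      unfolding abs_mult using IB[OF that] gpos by (intro mult_mono) auto
    show ?thesis
    proof (intro exI[of _ "bmax * B * B + \<gamma> * B"] ballI conjI)
      fix \<tau> assume t: "\<tau> \<in> {t0..T}"
      have "0 \<le> \<gamma> * B" using gpos B0 by simp
      then show "\<bar>hS \<tau>\<bar> \<le> bmax * B * B + \<gamma> * B" using k1[OF t] by (simp add: hS_def)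
      show "\<bar>hI \<tau>\<bar> \<le> bmax * B * B + \<gamma> * B" using k1[OF t] k2[OF t] unfolding hI_def by linarith
    qed
  qed
  have qS: "S t0 = fst q" and qI: "I t0 = snd q" using yt0 by (auto simp: S_def I_def)
  have lnI: "I z \<ge> snd q" if z: "t0 \<le> z" "\<forall>\<tau>\<in>{t0..z}. S \<tau> \<ge> Ss \<and> I \<tau> > 0" for z
  proof -
    obtain M where M: "\<forall>\<tau>\<in>{t0..z}. \<bar>hS \<tau>\<bar> \<le> M \<and> \<bar>hI \<tau>\<bar> \<le> M" using bnd by blast
    have ci: "continuous_on {t0..z} (\<lambda>\<tau>. inverse (I \<tau>))"
      using z(2) by (intro continuous_intros contI) auto
    have ch: "((\<lambda>\<tau>. inverse (I \<tau>) * hI \<tau>) has_integral (ln (I z) - ln (I t0))) {t0..z}"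
      by (rule chain_int[where M=M, OF z(1) intI _ DERIV_ln ci]) (use M z(2) in auto)
    have "0 \<le> ln (I z) - ln (I t0)"
    proof (rule has_integral_nonneg[OF ch])
      fix \<tau> assume t: "\<tau> \<in> {t0..z}"
      then have It: "I \<tau> > 0" and St: "S \<tau> \<ge> Ss" using z by auto
      have "bmin * Ss \<le> \<beta> \<tau> * S \<tau>" using bb[of \<tau>] t St Ss_pos bpos by (intro mult_mono) auto
      then have "0 \<le> \<beta> \<tau> * S \<tau> - \<gamma>" using gamma_eq by simp
      moreover have "inverse (I \<tau>) * hI \<tau> = \<beta> \<tau> * S \<tau> - \<gamma>"
        using It by (simp add: hI_def field_simps)
      ultimately show "0 \<le> inverse (I \<tau>) * hI \<tau>" by simp
    qed
    moreover have "I z > 0" using z by auto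
    ultimately show ?thesis using qI I0 by (simp add: ln_le_cancel_iff)
  qed
  have Imono: "I t \<ge> snd q" if T: "t0 \<le> t" "t \<le> T" "\<forall>\<tau>\<in>{t0..T}. S \<tau> \<ge> Ss" for t T
  proof -
    define Zs where "Zs = {t0..T} \<inter> I -` {..snd q / 2}"
    have noZ: "Zs = {}"
    proof (rule ccontr)
      assume ne: "Zs \<noteq> {}"
      have cl: "closed Zs" unfolding Zs_def by (rule continuous_closed_preimage[OF contI]) auto
      have bd: "bdd_below Zs" by (auto simp: Zs_def bdd_below_def)
      define z where "z = Inf Zs"
      have zZ: "z \<in> Zs" unfolding z_def using closed_contains_Inf[OF ne bd cl] .
      have before: "I \<tau> > snd q / 2" if "t0 \<le> \<tau>" "\<tau> < z" for \<tau>
      proof (rule ccontr)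
        assume "\<not> I \<tau> > snd q / 2"
        then have "\<tau> \<in> Zs" using that zZ by (auto simp: Zs_def)
        then have "z \<le> \<tau>" unfolding z_def using bd by (rule cInf_lower)
        then show False using that by auto
      qed
      have zt0: "t0 \<le> z" "z \<le> T" and Iz: "I z \<le> snd q / 2" using zZ by (auto simp: Zs_def)
      have "z \<noteq> t0" using Iz qI I0 by auto
      then have zgt: "t0 < z" using zt0 by auto
      have zin: "z \<in> {t0..T}" using zt0 by auto
      have hq: "snd q / 2 > 0" using I0 by simp
      obtain d where d: "d > 0" and dH: "\<And>x. x \<in> {t0..T} \<Longrightarrow> dist x z < d \<Longrightarrow> dist (I x) (I z) < snd q / 2"
        using contI[of T, unfolded continuous_on_iff, rule_format, OF zin hq] by blast
      define z' where "z' = max t0 (z - d / 2)"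
      have z': "t0 \<le> z'" "z' < z" "dist z' z < d" using d zgt by (auto simp: z'_def dist_real_def)
      have "\<forall>\<tau>\<in>{t0..z'}. S \<tau> \<ge> Ss \<and> I \<tau> > 0"
      proof
        fix \<tau> assume t: "\<tau> \<in> {t0..z'}"
        then have "I \<tau> > snd q / 2" using before[of \<tau>] z' by auto
        moreover have "S \<tau> \<ge> Ss" using T(3) t z' zt0 by auto
        ultimately show "S \<tau> \<ge> Ss \<and> I \<tau> > 0" using I0 by auto
      qed
      then have "I z' \<ge> snd q" using lnI[of z'] z' by auto
      moreover have "dist (I z') (I z) < snd q / 2" using dH[of z'] z' zt0 by auto
      then have "\<bar>I z' - I z\<bar> < snd q / 2" by (simp add: dist_real_def)
      moreover have "I z' - I z \<le> \<bar>I z' - I z\<bar>" by simp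
      ultimately show False using Iz by linarith
    qed
    have "\<forall>\<tau>\<in>{t0..t}. S \<tau> \<ge> Ss \<and> I \<tau> > 0"
    proof
      fix \<tau> assume t: "\<tau> \<in> {t0..t}"
      then have "\<tau> \<notin> Zs" using noZ by auto
      then have "I \<tau> > snd q / 2" using t T by (auto simp: Zs_def)
      then show "S \<tau> \<ge> Ss \<and> I \<tau> > 0" using T t I0 by auto
    qed
    then show ?thesis using lnI[of t] T by auto
  qed
  have Vmono: "V (y T) \<ge> V q" if T: "t0 \<le> T" "\<forall>\<tau>\<in>{t0..T}. S \<tau> \<ge> Ss" for T
  proof -
    obtain M where M: "\<forall>\<tau>\<in>{t0..T}. \<bar>hS \<tau>\<bar> \<le> M \<and> \<bar>hI \<tau>\<bar> \<le> M" using bnd by blast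
    have Sp: "S \<tau> > 0" if "\<tau> \<in> {t0..T}" for \<tau> using T that Ss_pos by force
    have ci: "continuous_on {t0..T} (\<lambda>\<tau>. inverse (S \<tau>))"
    proof -
      have "\<forall>\<tau>\<in>{t0..T}. S \<tau> \<noteq> 0" using Sp by fastforce
      then show ?thesis by (rule continuous_on_inverse[OF contS])
    qed
    have ch: "((\<lambda>\<tau>. inverse (S \<tau>) * hS \<tau>) has_integral (ln (S T) - ln (S t0))) {t0..T}"
      by (rule chain_int[where M=M, OF T(1) intS _ DERIV_ln ci]) (use M Sp in auto)
    have all: "((\<lambda>\<tau>. hS \<tau> + hI \<tau> - Ss * (inverse (S \<tau>) * hS \<tau>)) has_integral
        ((S T - S t0) + (I T - I t0) - Ss * (ln (S T) - ln (S t0)))) {t0..T}"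
      by (intro has_integral_diff has_integral_add has_integral_mult_right ch intS intI) (use T in auto)
    have "0 \<le> (S T - S t0) + (I T - I t0) - Ss * (ln (S T) - ln (S t0))"
    proof (rule has_integral_nonneg[OF all])
      fix \<tau> assume t: "\<tau> \<in> {t0..T}"
      have It: "I \<tau> \<ge> snd q" using Imono[of \<tau> T] t T by auto
      have "hS \<tau> + hI \<tau> - Ss * (inverse (S \<tau>) * hS \<tau>) = I \<tau> * (Ss * \<beta> \<tau> - \<gamma>)"
        using Sp[OF t] by (simp add: hS_def hI_def field_simps)
      moreover have "Ss * \<beta> \<tau> - \<gamma> \<ge> 0" using bb[of \<tau>] t Ss_pos gamma_eq
        by (simp add: mult_left_mono mult.commute)
      ultimately show "0 \<le> hS \<tau> + hI \<tau> - Ss * (inverse (S \<tau>) * hS \<tau>)" using It I0 by simp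
    qed
    then show ?thesis using qS qI by (simp add: V_def S_def I_def algebra_simps)
  qed
  show False
  proof (cases "\<exists>t1\<ge>t0. S t1 \<le> Ss")
    case True
    then obtain t1 where t1: "t1 \<ge> t0" "S t1 \<le> Ss" by blast
    define Z2 where "Z2 = {t0..t1} \<inter> S -` {..Ss}"
    have ne: "Z2 \<noteq> {}" using t1 by (auto simp: Z2_def)
    have cl: "closed Z2" unfolding Z2_def by (rule continuous_closed_preimage[OF contS]) auto
    have bd: "bdd_below Z2" by (auto simp: Z2_def bdd_below_def)
    define z where "z = Inf Z2"
    have zZ: "z \<in> Z2" unfolding z_def using closed_contains_Inf[OF ne bd cl] .
    have zt: "t0 \<le> z" "z \<le> t1" "S z \<le> Ss" using zZ by (auto simp: Z2_def)
    have before: "S \<tau> > Ss" if "t0 \<le> \<tau>" "\<tau> < z" for \<tau>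
    proof (rule ccontr)
      assume "\<not> S \<tau> > Ss"
      then have "\<tau> \<in> Z2" using that zt by (auto simp: Z2_def)
      then have "z \<le> \<tau>" unfolding z_def using bd by (rule cInf_lower)
      then show False using that by auto
    qed
    obtain x where x: "t0 \<le> x" "x \<le> z" "S x = Ss"
      using IVT2'[of S z Ss t0] zt qS S0 contS[of z] by auto
    have "x \<in> Z2" using x zt by (auto simp: Z2_def)
    then have "z \<le> x" unfolding z_def using bd by (rule cInf_lower)
    then have Sz: "S z = Ss" using x by auto
    have allS: "\<forall>\<tau>\<in>{t0..z}. S \<tau> \<ge> Ss"
    proof
      fix \<tau> assume t: "\<tau> \<in> {t0..z}"
      show "S \<tau> \<ge> Ss"
      proof (cases "\<tau> = z")
        case True then show ?thesis using Sz by simp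
      next
        case False then show ?thesis using before[of \<tau>] t by auto
      qed
    qed
    have "V (y z) \<ge> V q" using Vmono[OF zt(1) allS] .
    then have "V (y z) > C0" using VC by simp
    moreover have "V (y z) = I z + Ss - Ss * ln Ss" using Sz by (simp add: V_def S_def I_def)
    ultimately have "I z > Imax" by (simp add: C0_def)
    moreover have "I z \<le> Imax" using inG[of z] zt by (simp add: G_set_def I_def)
    ultimately show False by simp
  next
    case False
    then have Sgt: "\<And>t. t \<ge> t0 \<Longrightarrow> S t > Ss" by (meson not_le)
    define c where "c = bmin * Ss * snd q"
    have c0: "c > 0" using bpos Ss_pos I0 by (simp add: c_def)
    define T where "T = t0 + (fst q - Ss) / c + 1"
    have T0: "t0 \<le> T" using S0 c0 by (simp add: T_def)
    have allS: "\<forall>\<tau>\<in>{t0..T}. S \<tau> \<ge> Ss" using Sgt by (simp add: less_imp_le)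
    have "S T - S t0 \<le> (- c) * (T - t0)"
    proof -
      have ci: "((\<lambda>_. - c) has_integral (- c) * (T - t0)) {t0..T}"
        using has_integral_const_real[of "- c" t0 T] T0 by (simp add: content_real mult.commute)
      have hle: "hS \<tau> \<le> - c" if t: "\<tau> \<in> {t0..T}" for \<tau>
      proof -
        have "snd q \<le> I \<tau>" using Imono[of \<tau> T] t allS by auto
        moreover have "Ss \<le> S \<tau>" using allS t by auto
        moreover have "bmin \<le> \<beta> \<tau>" using bb[of \<tau>] t by auto
        ultimately have "bmin * Ss * snd q \<le> \<beta> \<tau> * S \<tau> * I \<tau>"
          using bpos Ss_pos I0 by (intro mult_mono) (auto intro: mult_nonneg_nonneg)
        then show ?thesis by (simp add: hS_def c_def)
      qed
      show ?thesis by (rule has_integral_le[OF intS[of t0 T] ci]) (use T0 hle in auto)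
    qed
    moreover have "(- c) * (T - t0) = - (fst q - Ss) - c" using c0 by (simp add: T_def field_simps)
    ultimately have "S T < Ss" using qS c0 by simp
    then show False using Sgt[OF T0] by simp
  qed
qed

end

lemma dist_pair_comp:
  fixes p q :: "real \<times> real"
  assumes "dist q p < e"
  shows "\<bar>fst q - fst p\<bar> < e" "\<bar>snd q - snd p\<bar> < e"
proof -
  have d: "dist q p = sqrt ((fst q - fst p)\<^sup>2 + (snd q - snd p)\<^sup>2)"
    using dist_Pair_Pair[of "fst q" "snd q" "fst p" "snd p"] by (simp add: dist_real_def)
  have "\<bar>fst q - fst p\<bar> \<le> sqrt ((fst q - fst p)\<^sup>2 + (snd q - snd p)\<^sup>2)"
    using real_sqrt_le_mono[of "(fst q - fst p)\<^sup>2" "(fst q - fst p)\<^sup>2 + (snd q - snd p)\<^sup>2"] by simp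
  then show "\<bar>fst q - fst p\<bar> < e" using assms d by linarith
  have "\<bar>snd q - snd p\<bar> \<le> sqrt ((fst q - fst p)\<^sup>2 + (snd q - snd p)\<^sup>2)"
    using real_sqrt_le_mono[of "(snd q - snd p)\<^sup>2" "(fst q - fst p)\<^sup>2 + (snd q - snd p)\<^sup>2"] by simp
  then show "\<bar>snd q - snd p\<bar> < e" using assms d by linarith
qed

lemma exp_strict: "y > 0 \<Longrightarrow> 1 + y < exp (y::real)"
proof -
  assume y: "y > 0"
  have "1 + y / 2 \<le> exp (y / 2)" by (rule exp_ge_add_one_self)
  then have "(1 + y / 2)\<^sup>2 \<le> (exp (y / 2))\<^sup>2" using y by (intro power_mono) auto
  also have "(exp (y / 2))\<^sup>2 = exp y" by (simp add: power2_eq_square exp_add[symmetric])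
  finally have "1 + y + y\<^sup>2 / 4 \<le> exp y" by (simp add: power2_eq_square field_simps)
  moreover have "y\<^sup>2 / 4 > 0" using y by simp
  ultimately show ?thesis by linarith
qed

context sirloc
begin

lemma V_cont: "fst p > 0 \<Longrightarrow> isCont V p"
  unfolding V_def[abs_def] by (intro continuous_intros) auto

lemma front_iff:
  assumes I: "0 < snd p" "snd p < Imax"
  shows "p \<in> frontier (admissible_set \<gamma> bmin bmax Imax t0) \<longleftrightarrow> (fst p > Ss \<and> V p = C0)"
proof
  let ?A = "admissible_set \<gamma> bmin bmax Imax t0"
  assume pf: "p \<in> frontier ?A"
  show "fst p > Ss \<and> V p = C0"
  proof (rule ccontr)
    assume nc: "\<not> (fst p > Ss \<and> V p = C0)"
    show False
    proof (cases "fst p > Ss \<and> V p > C0")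
      case True
      have fp: "fst p > 0" using True Ss_pos by simp
      obtain d where d: "d > 0" and dH: "\<And>q. dist q p < d \<Longrightarrow> dist (V q) (V p) < V p - C0"
        using V_cont[OF fp, unfolded continuous_at_eps_delta] True by (metis diff_gt_0_iff_gt)
      define e where "e = min d (min (fst p - Ss) (snd p))"
      have e: "e > 0" using d True I by (simp add: e_def)
      have "\<forall>q. dist q p < e \<longrightarrow> q \<notin> ?A"
      proof (intro allI impI)
        fix q assume q: "dist q p < e"
        have c1: "\<bar>fst q - fst p\<bar> < e" "\<bar>snd q - snd p\<bar> < e" using dist_pair_comp[OF q] by auto
        have "fst q > Ss" using c1 by (simp add: e_def abs_less_iff)
        moreover have "snd q > 0" using c1 by (simp add: e_def abs_less_iff)
        moreover have "V q > C0"
        proof -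
          have "dist (V q) (V p) < V p - C0" using dH q by (simp add: e_def)
          then show ?thesis by (simp add: dist_real_def abs_less_iff)
        qed
        ultimately show "q \<notin> ?A" by (rule nonadm)
      qed
      then have "p \<notin> closure ?A" using e unfolding closure_approachable by (metis dist_commute)
      then show False using pf by (simp add: frontier_def)
    next
      case False
      have "\<exists>e>0. ball p e \<subseteq> ?A"
      proof (cases "fst p < Ss")
        case True
        define e where "e = min (Ss - fst p) (min (snd p) (Imax - snd p))"
        have e: "e > 0" using True I by (simp add: e_def)
        have "ball p e \<subseteq> ?A"
        proof
          fix q assume "q \<in> ball p e"
          then have q: "dist q p < e" by (simp add: dist_commute)
          have c1: "\<bar>fst q - fst p\<bar> < e" "\<bar>snd q - snd p\<bar> < e" using dist_pair_comp[OF q] by auto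
          have "fst q \<le> Ss" "snd q > 0" "snd q \<le> Imax" using c1 by (auto simp: e_def abs_less_iff)
          then show "q \<in> ?A" by (intro adm) auto
        qed
        then show ?thesis using e by blast
      next
        case False2: False
        have fp: "fst p > 0" using False2 Ss_pos by simp
        have VpC: "V p < C0"
        proof (cases "fst p = Ss")
          case True then show ?thesis using I by (simp add: V_def C0_def)
        next
          case False
          then have "fst p > Ss" using False2 by simp
          then show ?thesis using nc \<open>\<not> (fst p > Ss \<and> V p > C0)\<close> by auto
        qed
        obtain d where d: "d > 0" and dH: "\<And>q. dist q p < d \<Longrightarrow> dist (V q) (V p) < C0 - V p"
          using V_cont[OF fp, unfolded continuous_at_eps_delta] VpC by (metis diff_gt_0_iff_gt)
        define e where "e = min d (min (fst p) (min (snd p) (Imax - snd p)))"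
        have e: "e > 0" using d fp I by (simp add: e_def)
        have "ball p e \<subseteq> ?A"
        proof
          fix q assume "q \<in> ball p e"
          then have q: "dist q p < e" by (simp add: dist_commute)
          have c1: "\<bar>fst q - fst p\<bar> < e" "\<bar>snd q - snd p\<bar> < e" using dist_pair_comp[OF q] by auto
          have "snd q > 0" "snd q \<le> Imax" using c1 by (auto simp: e_def abs_less_iff)
          moreover have "V q \<le> C0"
          proof -
            have "dist (V q) (V p) < C0 - V p" using dH q by (simp add: e_def)
            then show ?thesis by (simp add: dist_real_def abs_less_iff)
          qed
          ultimately show "q \<in> ?A" by (intro adm) auto
        qed
        then show ?thesis using e by blast
      qed
      then have "p \<in> interior ?A" by (simp add: mem_interior)
      then show False using pf by (simp add: frontier_def)
    qed
  qed
next
  let ?A = "admissible_set \<gamma> bmin bmax Imax t0"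
  assume H: "fst p > Ss \<and> V p = C0"
  have pA: "p \<in> ?A" using H I by (intro adm) auto
  have "p \<notin> interior ?A"
  proof
    assume "p \<in> interior ?A"
    then obtain e where e: "e > 0" "ball p e \<subseteq> ?A" by (auto simp: mem_interior)
    define q where "q = (fst p, snd p + e / 2)"
    have "dist p q = e / 2" using e by (cases p) (simp add: q_def dist_Pair_Pair dist_real_def)
    then have "q \<in> ball p e" using e by simp
    then have "q \<in> ?A" using e by auto
    moreover have "q \<notin> ?A"
    proof (rule nonadm)
      show "fst q > Ss" using H by (simp add: q_def)
      show "snd q > 0" using I e by (simp add: q_def)
      show "V q > C0" using H e by (simp add: q_def V_def)
    qed
    ultimately show False by simp
  qed
  then show "p \<in> frontier ?A" using pA closure_subset by (auto simp: frontier_def)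
qed

end

context sirloc
begin

definition H where "H v = Ss + Imax + \<gamma> * v - Ss * exp (bmin * v)"

lemma H_deriv: "(H has_real_derivative (\<gamma> - bmin * Ss * exp (bmin * v))) (at v)"
  unfolding H_def[abs_def] by (auto intro!: derivative_eq_intros simp: algebra_simps)

lemma curve_exists:
  "\<exists>wc. wc 0 = 0 \<and> (\<forall>t\<ge>0. 0 \<le> wc t \<and> H (wc t) > 0 \<and> (wc has_real_derivative H (wc t)) (at t))
        \<and> (\<forall>t>0. wc t > 0) \<and> (\<forall>v\<ge>0. (\<forall>u\<in>{0..v}. H u > 0) \<longrightarrow> (\<exists>t\<ge>0. wc t = v))"
proof -
  define xx where "xx = 4 * Imax / Ss + 1"
  define W where "W = xx / bmin"
  have xx1: "xx \<ge> 1" using Ipos Ss_pos by (simp add: xx_def)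
  have W0: "W > 0" using xx1 bpos by (simp add: W_def)
  have bW: "bmin * W = xx" using bpos by (simp add: W_def)
  have "1 + xx + xx\<^sup>2 / 4 \<le> exp xx"
  proof -
    have "1 + xx / 2 \<le> exp (xx / 2)" by (rule exp_ge_add_one_self)
    then have "(1 + xx / 2)\<^sup>2 \<le> (exp (xx / 2))\<^sup>2" using xx1 by (intro power_mono) auto
    also have "(exp (xx / 2))\<^sup>2 = exp xx" by (simp add: power2_eq_square exp_add[symmetric])
    finally show ?thesis by (simp add: power2_eq_square field_simps)
  qed
  then have "Ss * (1 + xx + xx\<^sup>2 / 4) \<le> Ss * exp xx" using Ss_pos by (intro mult_left_mono) auto
  moreover have "Ss * (1 + xx + xx\<^sup>2 / 4) = Ss + Ss * xx + (Ss * xx\<^sup>2) / 4" by (simp add: algebra_simps)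
  ultimately have f1: "Ss + Ss * xx + (Ss * xx\<^sup>2) / 4 \<le> Ss * exp xx" by linarith
  have f2: "Ss * xx\<^sup>2 \<ge> Ss * xx" using xx1 Ss_pos by (intro mult_left_mono) (auto simp: power2_eq_square)
  have f3: "Ss * xx / 4 = Imax + Ss / 4" using Ss_pos by (simp add: xx_def field_simps)
  have f4: "\<gamma> * W = Ss * xx" using bpos by (simp add: W_def gamma_eq)
  have HWe: "H W = Ss + Imax + Ss * xx - Ss * exp xx" unfolding H_def bW f4 by simp
  have HW: "H W \<le> 0" using f1 f2 f3 HWe Ss_pos by linarith
  define L where "L = \<gamma> + bmin * Ss * exp (bmin * W) + 1"
  have L0: "L > 0" using gpos bpos Ss_pos by (simp add: L_def add_pos_pos)
  have Lb: "\<bar>\<gamma> - bmin * Ss * exp (bmin * v)\<bar> \<le> L" if "0 \<le> v" "v \<le> W" for v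
  proof -
    have "exp (bmin * v) \<le> exp (bmin * W)" using that bpos by simp
    then have "bmin * Ss * exp (bmin * v) \<le> bmin * Ss * exp (bmin * W)" using bpos Ss_pos by simp
    moreover have "0 \<le> bmin * Ss * exp (bmin * v)" using bpos Ss_pos by simp
    ultimately show ?thesis using gpos by (simp add: L_def abs_le_iff)
  qed
  have H0: "H 0 > 0" using Ipos by (simp add: H_def)
  show ?thesis using ode_fwd[of H "\<lambda>v. \<gamma> - bmin * Ss * exp (bmin * v)" W L, OF H_deriv H0 W0 HW L0 Lb]
    by blast
qed

lemma main:
  "\<exists>J tbar (\<beta>b :: real \<Rightarrow> real) (x :: real \<Rightarrow> real \<times> real) (lam :: real \<Rightarrow> real \<times> real).
     \<comment> \<open>the curve is defined on an interval J ending at tbar\<close>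
     is_interval J \<and> tbar \<in> J \<and> (\<forall>t\<in>J. t \<le> tbar) \<and> J \<noteq> {tbar} \<and>
     \<comment> \<open>admissible input, generated by the input rule\<close>
     \<beta>b \<in> borel_measurable lebesgue \<and> (\<forall>t. bmin \<le> \<beta>b t \<and> \<beta>b t \<le> bmax) \<and>
     (\<forall>t\<in>J. (snd (lam t) - fst (lam t) < 0 \<longrightarrow> \<beta>b t = bmax) \<and>
             (snd (lam t) - fst (lam t) > 0 \<longrightarrow> \<beta>b t = bmin)) \<and>
     \<comment> \<open>integral curve of the SIR dynamics on J\<close>
     (\<forall>s\<in>J. \<forall>t\<in>J. s \<le> t \<longrightarrow>
        ((\<lambda>\<tau>. sir_f \<gamma> (x \<tau>) (\<beta>b \<tau>)) has_integral (x t - x s)) {s..t}) \<and>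
     \<comment> \<open>adjoint equation  \<lambda>' = [[\<beta> I, -\<beta> I],[\<beta> S, -\<beta> S + \<gamma>]] \<lambda>,  \<lambda>(tbar) = (0,1)\<close>
     (\<forall>s\<in>J. \<forall>t\<in>J. s \<le> t \<longrightarrow>
        ((\<lambda>\<tau>. (\<beta>b \<tau> * snd (x \<tau>) * fst (lam \<tau>) - \<beta>b \<tau> * snd (x \<tau>) * snd (lam \<tau>),
                \<beta>b \<tau> * fst (x \<tau>) * fst (lam \<tau>) + (- \<beta>b \<tau> * fst (x \<tau>) + \<gamma>) * snd (lam \<tau>)))
          has_integral (lam t - lam s)) {s..t}) \<and>
     lam tbar = (0, 1) \<and>
     \<comment> \<open>Hamiltonian minimum condition (a.e.)\<close>
     (AE t in lebesgue. t \<in> J \<longrightarrow>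
        lam t \<bullet> sir_f \<gamma> (x t) (\<beta>b t) = 0 \<and>
        (\<forall>b. bmin \<le> b \<and> b \<le> bmax \<longrightarrow> lam t \<bullet> sir_f \<gamma> (x t) (\<beta>b t) \<le> lam t \<bullet> sir_f \<gamma> (x t) b)) \<and>
     \<comment> \<open>ends tangentially to G_0 \<inter> \<Pi> at z = (\<gamma>/bmin, Imax)\<close>
     x tbar = (\<gamma> / bmin, Imax) \<and> x tbar \<in> G_zero Imax \<inter> Pi_set \<and>
     Lfg \<gamma> (x tbar) (\<beta>b tbar) = 0 \<and>
     (\<forall>b. bmin \<le> b \<and> b \<le> bmax \<longrightarrow> Lfg \<gamma> (x tbar) (\<beta>b tbar) \<le> Lfg \<gamma> (x tbar) b) \<and>
     \<comment> \<open>the curve lies in G_- just before tbar\<close>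
     (\<exists>\<epsilon>>0. {tbar - \<epsilon><..<tbar} \<subseteq> J \<and> (\<forall>t\<in>{tbar - \<epsilon><..<tbar}. x t \<in> G_minus Imax)) \<and>
     \<comment> \<open>the barrier (within \<Pi>, I > 0) is constituted by this curve\<close>
     barrier \<gamma> bmin bmax Imax t0 \<inter> {p \<in> Pi_set. snd p > 0}
       = x ` {t \<in> J. t < tbar} \<inter> {p \<in> Pi_set. snd p > 0}"
proof -
  obtain wc where wc0: "wc 0 = 0"
    and wcH: "\<And>t. t \<ge> 0 \<Longrightarrow> 0 \<le> wc t \<and> H (wc t) > 0 \<and> (wc has_real_derivative H (wc t)) (at t)"
    and wcpos: "\<And>t. t > 0 \<Longrightarrow> wc t > 0"
    and wcsurj: "\<And>v. v \<ge> 0 \<Longrightarrow> (\<forall>u\<in>{0..v}. H u > 0) \<Longrightarrow> (\<exists>t\<ge>0. wc t = v)"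
    using curve_exists by blast
  define x where "x = (\<lambda>t. (Ss * exp (bmin * wc (- t)), H (wc (- t))))"
  define lam where "lam = (\<lambda>t. (1 - exp (- bmin * wc (- t)), (1::real)))"
  have vD: "((\<lambda>t. wc (- t)) has_real_derivative - H (wc (- t))) (at t)" if t: "t \<le> 0" for t
  proof -
    have a: "(wc has_real_derivative H (wc (- t))) (at (- t))" using wcH[of "- t"] t by auto
    have b: "((\<lambda>t. - t) has_real_derivative - 1) (at t)" by (auto intro!: derivative_eq_intros)
    show ?thesis using DERIV_chain2[OF a b] by simp
  qed
  have eprod: "exp (bmin * v) * exp (- bmin * v) = 1" for v by (simp add: exp_minus)
  have xD: "(x has_vector_derivative sir_f \<gamma> (x t) bmin) (at t)" if t: "t \<le> 0" for t
  proof -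
    have d1: "((\<lambda>t. Ss * exp (bmin * wc (- t))) has_real_derivative
        (Ss * exp (bmin * wc (- t)) * (bmin * (- H (wc (- t)))))) (at t)"
      by (auto intro!: derivative_eq_intros vD[OF t] simp: algebra_simps)
    have d2: "((\<lambda>t. H (wc (- t))) has_real_derivative
        ((\<gamma> - bmin * Ss * exp (bmin * wc (- t))) * (- H (wc (- t))))) (at t)"
      using DERIV_chain2[OF H_deriv vD[OF t]] .
    have "(x has_vector_derivative (Ss * exp (bmin * wc (- t)) * (bmin * (- H (wc (- t)))),
        (\<gamma> - bmin * Ss * exp (bmin * wc (- t))) * (- H (wc (- t))))) (at t)"
      unfolding x_def using d1 d2
      by (intro has_vector_derivative_Pair) (simp_all add: has_real_derivative_iff_has_vector_derivative)
    then show ?thesis unfolding sir_f_def x_def by (simp add: algebra_simps)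
  qed
  have lamD: "(lam has_vector_derivative
      (bmin * snd (x t) * fst (lam t) - bmin * snd (x t) * snd (lam t),
       bmin * fst (x t) * fst (lam t) + (- bmin * fst (x t) + \<gamma>) * snd (lam t))) (at t)" if t: "t \<le> 0" for t
  proof -
    have d1: "((\<lambda>t. 1 - exp (- bmin * wc (- t))) has_real_derivative
        (- (exp (- bmin * wc (- t)) * (- bmin * (- H (wc (- t))))))) (at t)"
      by (auto intro!: derivative_eq_intros vD[OF t] simp: algebra_simps)
    have d2: "((\<lambda>t. 1::real) has_real_derivative 0) (at t)" by simp
    have "(lam has_vector_derivative (- (exp (- bmin * wc (- t)) * (- bmin * (- H (wc (- t))))), 0)) (at t)"
      unfolding lam_def using d1 d2
      by (intro has_vector_derivative_Pair) (simp_all add: has_real_derivative_iff_has_vector_derivative)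
    moreover have "bmin * fst (x t) * fst (lam t) + (- bmin * fst (x t) + \<gamma>) * snd (lam t) = 0"
    proof -
      have "bmin * fst (x t) * fst (lam t) + (- bmin * fst (x t) + \<gamma>) * snd (lam t)
          = \<gamma> - bmin * Ss * (exp (bmin * wc (- t)) * exp (- bmin * wc (- t)))"
        by (simp add: x_def lam_def algebra_simps)
      then show ?thesis using eprod gamma_eq by simp
    qed
    moreover have "bmin * snd (x t) * fst (lam t) - bmin * snd (x t) * snd (lam t)
        = - (exp (- bmin * wc (- t)) * (- bmin * (- H (wc (- t)))))"
      by (simp add: x_def lam_def algebra_simps)
    ultimately show ?thesis by simp
  qed
  have inner_eq: "lam t \<bullet> sir_f \<gamma> (x t) b = (b - bmin) * Ss * H (wc (- t))" for t b
  proof -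
    define hv where "hv = H (wc (- t))"
    define E where "E = exp (bmin * wc (- t))"
    define e where "e = exp (- bmin * wc (- t))"
    have Ee: "E * e = 1" using eprod by (simp add: E_def e_def)
    have "lam t \<bullet> sir_f \<gamma> (x t) b = b * Ss * hv * (E * e) - \<gamma> * hv"
      by (simp add: lam_def x_def sir_f_def hv_def E_def e_def algebra_simps)
    also have "\<dots> = (b - bmin) * Ss * hv" unfolding Ee using gamma_eq by (simp add: algebra_simps)
    finally show ?thesis by (simp add: hv_def)
  qed
  have Hpos: "H (wc (- t)) > 0" if "t \<le> 0" for t using wcH[of "- t"] that by auto
  have CF1: "fst (x t) > Ss \<and> 0 < snd (x t) \<and> snd (x t) < Imax \<and> V (x t) = C0" if t: "t < 0" for t
  proof -
    define v where "v = wc (- t)"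
    have v0: "v > 0" using wcpos[of "- t"] t by (simp add: v_def)
    have bv: "bmin * v > 0" using v0 bpos by simp
    have "fst (x t) = Ss * exp (bmin * v)" by (simp add: x_def v_def)
    moreover have "exp (bmin * v) > 1" using bv by (rule exp_gt_one)
    ultimately have f: "fst (x t) > Ss" using Ss_pos by simp
    have "snd (x t) - Imax = Ss * (1 + bmin * v - exp (bmin * v))"
      unfolding x_def v_def H_def by (simp add: gamma_eq algebra_simps)
    moreover have "1 + bmin * v - exp (bmin * v) < 0" using exp_strict[OF bv] by simp
    ultimately have "snd (x t) - Imax < 0" using Ss_pos by (simp add: mult_pos_neg)
    then have s: "snd (x t) < Imax" by simp
    have "ln (fst (x t)) = ln Ss + bmin * v" using Ss_pos by (simp add: x_def v_def ln_mult)
    then have "V (x t) = C0" unfolding V_def C0_def x_def v_def H_def by (simp add: gamma_eq algebra_simps)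
    then show ?thesis using f s Hpos[of t] t by (simp add: x_def)
  qed
  have CF2: "\<exists>t<0. x t = p" if p: "fst p > Ss" "V p = C0" "snd p > 0" for p
  proof -
    define vp where "vp = ln (fst p / Ss) / bmin"
    have fp: "fst p > 0" using p Ss_pos by simp
    have "fst p / Ss > 1" using p Ss_pos by simp
    then have "ln (fst p / Ss) > 0" by simp
    then have vp0: "vp > 0" using bpos by (simp add: vp_def)
    have evp: "exp (bmin * vp) = fst p / Ss" using bpos fp Ss_pos by (simp add: vp_def)
    have gvp: "\<gamma> * vp = Ss * (ln (fst p) - ln Ss)" using bpos fp Ss_pos by (simp add: vp_def gamma_eq ln_div)
    have Hvp: "H vp = snd p"
    proof -
      have "H vp = Ss + Imax + Ss * (ln (fst p) - ln Ss) - fst p" using evp gvp Ss_pos by (simp add: H_def)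
      also have "\<dots> = snd p" using p(2) by (simp add: V_def C0_def algebra_simps)
      finally show ?thesis .
    qed
    have Hge: "H u \<ge> H vp" if u: "0 \<le> u" "u \<le> vp" for u
    proof -
      have "exp (bmin * vp) = exp (bmin * u) * exp (bmin * (vp - u))" by (simp add: exp_add[symmetric] algebra_simps)
      moreover have "exp (bmin * (vp - u)) \<ge> 1 + bmin * (vp - u)" using exp_ge_add_one_self by simp
      ultimately have e1: "exp (bmin * vp) \<ge> exp (bmin * u) * (1 + bmin * (vp - u))" by simp
      have "H u - H vp = \<gamma> * (u - vp) - Ss * exp (bmin * u) + Ss * exp (bmin * vp)" by (simp add: H_def algebra_simps)
      also have "\<dots> \<ge> \<gamma> * (u - vp) - Ss * exp (bmin * u) + Ss * (exp (bmin * u) * (1 + bmin * (vp - u)))"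
        using e1 Ss_pos by simp
      also have "\<gamma> * (u - vp) - Ss * exp (bmin * u) + Ss * (exp (bmin * u) * (1 + bmin * (vp - u)))
          = bmin * Ss * (vp - u) * (exp (bmin * u) - 1)" by (simp add: gamma_eq algebra_simps)
      also have "\<dots> \<ge> 0" using u bpos Ss_pos by (intro mult_nonneg_nonneg) auto
      finally show ?thesis by simp
    qed
    have "\<forall>u\<in>{0..vp}. H u > 0" using Hge Hvp p(3) by fastforce
    then obtain t' where t': "t' \<ge> 0" "wc t' = vp" using wcsurj[of vp] vp0 by auto
    have "t' \<noteq> 0" using t' wc0 vp0 by auto
    then have "- t' < 0" using t' by simp
    moreover have "x (- t') = p" using t' evp Hvp Ss_pos by (simp add: x_def prod_eq_iff)
    ultimately show ?thesis by blast
  qed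
  have F1: "is_interval {..0::real}" by (rule is_interval_ic)
  have F2: "(0::real) \<in> {..0}" by simp
  have F3: "\<forall>t\<in>{..0::real}. t \<le> 0" by simp
  have F4: "{..0::real} \<noteq> {0}"
  proof
    assume "{..0::real} = {0}"
    then have "(-1::real) \<in> {0}" by (metis atMost_iff neg_le_0_iff_le zero_le_one)
    then show False by simp
  qed
  have F5: "(\<lambda>_::real. bmin) \<in> borel_measurable lebesgue" by simp
  have F6: "\<forall>t::real. bmin \<le> bmin \<and> bmin \<le> bmax" using ble by simp
  have F7: "\<forall>t\<in>{..0}. (snd (lam t) - fst (lam t) < 0 \<longrightarrow> bmin = bmax) \<and> (snd (lam t) - fst (lam t) > 0 \<longrightarrow> bmin = bmin)"
    by (simp add: lam_def)
  have F8: "\<forall>s\<in>{..0}. \<forall>t\<in>{..0}. s \<le> t \<longrightarrow> ((\<lambda>\<tau>. sir_f \<gamma> (x \<tau>) bmin) has_integral (x t - x s)) {s..t}"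
  proof (intro ballI impI)
    fix s t :: real assume st: "s \<in> {..0}" "t \<in> {..0}" "s \<le> t"
    show "((\<lambda>\<tau>. sir_f \<gamma> (x \<tau>) bmin) has_integral (x t - x s)) {s..t}"
      using st xD by (intro fundamental_theorem_of_calculus) (auto intro: has_vector_derivative_at_within)
  qed
  have F9: "\<forall>s\<in>{..0}. \<forall>t\<in>{..0}. s \<le> t \<longrightarrow>
        ((\<lambda>\<tau>. (bmin * snd (x \<tau>) * fst (lam \<tau>) - bmin * snd (x \<tau>) * snd (lam \<tau>),
                bmin * fst (x \<tau>) * fst (lam \<tau>) + (- bmin * fst (x \<tau>) + \<gamma>) * snd (lam \<tau>)))
          has_integral (lam t - lam s)) {s..t}"
  proof (intro ballI impI)
    fix s t :: real assume st: "s \<in> {..0}" "t \<in> {..0}" "s \<le> t"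
    show "((\<lambda>\<tau>. (bmin * snd (x \<tau>) * fst (lam \<tau>) - bmin * snd (x \<tau>) * snd (lam \<tau>),
                bmin * fst (x \<tau>) * fst (lam \<tau>) + (- bmin * fst (x \<tau>) + \<gamma>) * snd (lam \<tau>)))
          has_integral (lam t - lam s)) {s..t}"
      using st lamD by (intro fundamental_theorem_of_calculus) (auto intro: has_vector_derivative_at_within)
  qed
  have F10: "lam 0 = (0, 1)" using wc0 by (simp add: lam_def)
  have F11: "AE t in lebesgue. t \<in> {..0} \<longrightarrow> lam t \<bullet> sir_f \<gamma> (x t) bmin = 0 \<and>
        (\<forall>b. bmin \<le> b \<and> b \<le> bmax \<longrightarrow> lam t \<bullet> sir_f \<gamma> (x t) bmin \<le> lam t \<bullet> sir_f \<gamma> (x t) b)"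
  proof (rule AE_I2, intro impI conjI allI)
    fix t :: real assume t: "t \<in> {..0}"
    show "lam t \<bullet> sir_f \<gamma> (x t) bmin = 0" by (simp add: inner_eq)
    fix b assume "bmin \<le> b \<and> b \<le> bmax"
    then show "lam t \<bullet> sir_f \<gamma> (x t) bmin \<le> lam t \<bullet> sir_f \<gamma> (x t) b"
      using Hpos[of t] t Ss_pos by (simp add: inner_eq)
  qed
  have x0: "x 0 = (Ss, Imax)" using wc0 by (simp add: x_def H_def)
  have F12: "x 0 = (\<gamma> / bmin, Imax)" using x0 by (simp add: Ss_def)
  have F13: "x 0 \<in> G_zero Imax \<inter> Pi_set"
    using x0 Ss_pos Ipos Ile cond by (simp add: G_zero_def Pi_set_def Ss_def[symmetric])
  have F14: "Lfg \<gamma> (x 0) bmin = 0" using x0 by (simp add: Lfg_def sir_f_def gamma_eq)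
  have F15: "\<forall>b. bmin \<le> b \<and> b \<le> bmax \<longrightarrow> Lfg \<gamma> (x 0) bmin \<le> Lfg \<gamma> (x 0) b"
    using x0 Ss_pos Ipos by (auto simp: Lfg_def sir_f_def intro!: mult_right_mono)
  have F16: "\<exists>\<epsilon>>0. {0 - \<epsilon><..<0} \<subseteq> {..0::real} \<and> (\<forall>t\<in>{0 - \<epsilon><..<0}. x t \<in> G_minus Imax)"
    using CF1 by (intro exI[of _ 1]) (auto simp: G_minus_def)
  have F17: "barrier \<gamma> bmin bmax Imax t0 \<inter> {p \<in> Pi_set. snd p > 0}
       = x ` {t \<in> {..0}. t < 0} \<inter> {p \<in> Pi_set. snd p > 0}"
  proof (intro equalityI subsetI)
    fix p assume p: "p \<in> barrier \<gamma> bmin bmax Imax t0 \<inter> {p \<in> Pi_set. snd p > 0}"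
    then have pf: "p \<in> frontier (admissible_set \<gamma> bmin bmax Imax t0)" and ps: "0 < snd p" "snd p < Imax"
      by (auto simp: barrier_def G_minus_def)
    then have "fst p > Ss \<and> V p = C0" using front_iff[OF ps] by blast
    then obtain t where "t < 0" "x t = p" using CF2 ps by blast
    then show "p \<in> x ` {t \<in> {..0}. t < 0} \<inter> {p \<in> Pi_set. snd p > 0}" using p by force
  next
    fix p assume p: "p \<in> x ` {t \<in> {..0}. t < 0} \<inter> {p \<in> Pi_set. snd p > 0}"
    then obtain t where t: "t < 0" "p = x t" and pp: "p \<in> Pi_set" by auto
    have c: "fst p > Ss" "0 < snd p" "snd p < Imax" "V p = C0" using CF1[OF t(1)] t by auto
    then have "p \<in> frontier (admissible_set \<gamma> bmin bmax Imax t0)" using front_iff[of p] by blast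
    then show "p \<in> barrier \<gamma> bmin bmax Imax t0 \<inter> {p \<in> Pi_set. snd p > 0}"
      using c pp by (auto simp: barrier_def G_minus_def)
  qed
  show ?thesis
    apply (rule exI[of _ "{..0::real}"], rule exI[of _ "0::real"], rule exI[of _ "\<lambda>_::real. bmin"], rule exI[of _ x], rule exI[of _ lam])
    using F1 F2 F3 F4 F5 F6 F7 F8 F9 F10 F11 F12 F13 F14 F15 F16 F17 by (intro conjI) assumption+
qed

end

theorem proposition2:
  fixes \<gamma> bmin bmax Imax t0 :: real
  assumes "\<gamma> > 0" "0 < bmin" "bmin \<le> bmax" "0 < Imax" "Imax \<le> 1"
    and "\<gamma> / bmin + Imax \<le> 1"
  shows "\<exists>J tbar (\<beta>b :: real \<Rightarrow> real) (x :: real \<Rightarrow> real \<times> real) (lam :: real \<Rightarrow> real \<times> real).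
     \<comment> \<open>the curve is defined on an interval J ending at tbar\<close>
     is_interval J \<and> tbar \<in> J \<and> (\<forall>t\<in>J. t \<le> tbar) \<and> J \<noteq> {tbar} \<and>
     \<comment> \<open>admissible input, generated by the input rule\<close>
     \<beta>b \<in> borel_measurable lebesgue \<and> (\<forall>t. bmin \<le> \<beta>b t \<and> \<beta>b t \<le> bmax) \<and>
     (\<forall>t\<in>J. (snd (lam t) - fst (lam t) < 0 \<longrightarrow> \<beta>b t = bmax) \<and>
             (snd (lam t) - fst (lam t) > 0 \<longrightarrow> \<beta>b t = bmin)) \<and>
     \<comment> \<open>integral curve of the SIR dynamics on J\<close>
     (\<forall>s\<in>J. \<forall>t\<in>J. s \<le> t \<longrightarrow>
        ((\<lambda>\<tau>. sir_f \<gamma> (x \<tau>) (\<beta>b \<tau>)) has_integral (x t - x s)) {s..t}) \<and>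
     \<comment> \<open>adjoint equation  \<lambda>' = [[\<beta> I, -\<beta> I],[\<beta> S, -\<beta> S + \<gamma>]] \<lambda>,  \<lambda>(tbar) = (0,1)\<close>
     (\<forall>s\<in>J. \<forall>t\<in>J. s \<le> t \<longrightarrow>
        ((\<lambda>\<tau>. (\<beta>b \<tau> * snd (x \<tau>) * fst (lam \<tau>) - \<beta>b \<tau> * snd (x \<tau>) * snd (lam \<tau>),
                \<beta>b \<tau> * fst (x \<tau>) * fst (lam \<tau>) + (- \<beta>b \<tau> * fst (x \<tau>) + \<gamma>) * snd (lam \<tau>)))
          has_integral (lam t - lam s)) {s..t}) \<and>
     lam tbar = (0, 1) \<and>
     \<comment> \<open>Hamiltonian minimum condition (a.e.)\<close>
     (AE t in lebesgue. t \<in> J \<longrightarrow>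
        lam t \<bullet> sir_f \<gamma> (x t) (\<beta>b t) = 0 \<and>
        (\<forall>b. bmin \<le> b \<and> b \<le> bmax \<longrightarrow> lam t \<bullet> sir_f \<gamma> (x t) (\<beta>b t) \<le> lam t \<bullet> sir_f \<gamma> (x t) b)) \<and>
     \<comment> \<open>ends tangentially to G_0 \<inter> \<Pi> at z = (\<gamma>/bmin, Imax)\<close>
     x tbar = (\<gamma> / bmin, Imax) \<and> x tbar \<in> G_zero Imax \<inter> Pi_set \<and>
     Lfg \<gamma> (x tbar) (\<beta>b tbar) = 0 \<and>
     (\<forall>b. bmin \<le> b \<and> b \<le> bmax \<longrightarrow> Lfg \<gamma> (x tbar) (\<beta>b tbar) \<le> Lfg \<gamma> (x tbar) b) \<and>
     \<comment> \<open>the curve lies in G_- just before tbar\<close>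
     (\<exists>\<epsilon>>0. {tbar - \<epsilon><..<tbar} \<subseteq> J \<and> (\<forall>t\<in>{tbar - \<epsilon><..<tbar}. x t \<in> G_minus Imax)) \<and>
     \<comment> \<open>the barrier (within \<Pi>, I > 0) is constituted by this curve\<close>
     barrier \<gamma> bmin bmax Imax t0 \<inter> {p \<in> Pi_set. snd p > 0}
       = x ` {t \<in> J. t < tbar} \<inter> {p \<in> Pi_set. snd p > 0}"
proof -
  interpret sirloc \<gamma> bmin bmax Imax "\<gamma> / bmin"
    using assms by unfold_locales auto
  show ?thesis by (rule main)
qed

end
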